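(* Let $V$ be a finite set with $n:=|V|$, and let $E^+,E^-\subseteq\binom{V}{2}$. Set \[ \mathcal{C}:=\{X\in\mathbb{S}^V_+ : \operatorname{tr}(X)=1,\ X_{ij}\ge 0\ \forall ij\in E^+,\ X_{ij}\le 0\ \forall ij\in E^-\} \] and let $H:=(V,E^+\cup E^-)$. Then the set of vertices of $\mathcal{C}$ is $\{e_ke_k^{\mathsf T} : k\in V,\ \deg_H(k)=n-1\}$.
   Context: $\mathbb{S}^V_+$ denotes the real symmetric positive semidefinite matrices indexed by $V$, with trace inner product; $e_k$ are standard basis vectors of $\mathbb{R}^V$; $\deg_H(k)$ is the degree of $k$ in the graph $H$. For a convex set $\mathcal{C}$ in a finite-dimensional space $\mathbb{E}$ and $\bar x\in\mathcal{C}$, the normal cone is $N_{\mathcal{C}}(\bar x):=\{c : \langle c,x\rangle\le\langle c,\bar x\rangle\ \forall x\in\mathcal{C}\}$; $\bar x$ is a vertex if $\dim N_{\mathcal{C}}(\bar x)=\dim\mathbb{E}$ (here $\mathbb{E}=\mathbb{S}^V$). *)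

theory Defs
  imports "HOL-Analysis.Analysis"
begin

text \<open>Symmetric matrices indexed by a finite type 'n (the vertex set V = UNIV).\<close>
definition sym_mats :: "(real^'n^'n) set" where
  "sym_mats = {X. transpose X = X}"

definition psd_mats :: "(real^'n^'n) set" where
  "psd_mats = {X. transpose X = X \<and> (\<forall>x. 0 \<le> x \<bullet> (X *v x))}"

definition trace_inner :: "real^'n^'n \<Rightarrow> real^'n^'n \<Rightarrow> real" where
  "trace_inner A B = trace (transpose A ** B)"

definition normal_cone :: "(real^'n^'n) set \<Rightarrow> real^'n^'n \<Rightarrow> (real^'n^'n) set" where
  "normal_cone C xb = {c \<in> sym_mats. \<forall>x\<in>C. trace_inner c x \<le> trace_inner c xb}"

definition vertices :: "(real^'n^'n) set \<Rightarrow> (real^'n^'n) set" where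
  "vertices C = {xb \<in> C. dim (normal_cone C xb) = dim (sym_mats :: (real^'n^'n) set)}"

definition specC :: "'n set set \<Rightarrow> 'n set set \<Rightarrow> (real^'n^'n) set" where
  "specC Ep Em = {X \<in> psd_mats. trace X = 1
      \<and> (\<forall>i j. {i,j} \<in> Ep \<longrightarrow> X$i$j \<ge> 0)
      \<and> (\<forall>i j. {i,j} \<in> Em \<longrightarrow> X$i$j \<le> 0)}"

definition graph_deg :: "'n set set \<Rightarrow> 'n \<Rightarrow> nat" where
  "graph_deg E k = card {j. {k,j} \<in> E}"

definition ekek :: "'n \<Rightarrow> real^'n^'n" where
  "ekek k = (\<chi> i j. (axis k (1::real))$i * (axis k (1::real))$j)"

end

theory Submission
  imports Defs
begin

definition Eu :: "'n::finite \<Rightarrow> 'n \<Rightarrow> real^'n^'n" where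
  "Eu a b = (\<chi> r s. if r = a \<and> s = b then 1 else 0)"

lemma Eu_entry[simp]: "Eu a b $ r $ s = (if r = a \<and> s = b then 1 else 0)"
  by (simp add: Eu_def)

lemma ifm: "(if P then 1 else 0) * (x::real) = (if P then x else 0)" by simp
lemma ifm2: "(x::real) * (if P then 1 else 0) = (if P then x else 0)" by simp

lemma ti_sum: "trace_inner A B = (\<Sum>a\<in>UNIV. \<Sum>b\<in>UNIV. A$a$b * B$a$b)"
  unfolding trace_inner_def trace_def matrix_matrix_mult_def transpose_def
  apply simp by (rule sum.swap)

lemma ti_comm: "trace_inner A B = trace_inner B A"
  unfolding ti_sum by (simp add: mult.commute)

lemma qf_sum: "x \<bullet> (X *v x) = (\<Sum>a\<in>UNIV. \<Sum>b\<in>UNIV. x$a * X$a$b * x$b)"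
  unfolding inner_vec_def matrix_vector_mult_def
  by (simp add: sum_distrib_left mult.assoc)

lemma dsum_delta1: "(\<Sum>s\<in>(UNIV::'b::finite set). (if (r::'a::finite) = a \<and> s = b then (f r s::real) else 0)) = (if r = a then f a b else 0)"
  by (cases "r = a") (simp_all add: sum.delta)

lemma dsum_delta: "(\<Sum>r\<in>(UNIV::'a::finite set). \<Sum>s\<in>(UNIV::'b::finite set). (if r = a \<and> s = b then (f r s::real) else 0)) = f a b"
  by (simp only: dsum_delta1) (simp add: sum.delta)

lemma ti_Eu[simp]: "trace_inner (Eu a b) X = X$a$b"
  unfolding ti_sum by (simp only: Eu_entry ifm dsum_delta)

lemma ti_Eu2[simp]: "trace_inner X (Eu a b) = X$a$b"
  using ti_Eu[of a b X] ti_comm[of X "Eu a b"] by simp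

lemma ti_add[simp]: "trace_inner (A + B) X = trace_inner A X + trace_inner B X"
  unfolding ti_sum by (simp add: distrib_right sum.distrib)
lemma ti_scale[simp]: "trace_inner (r *\<^sub>R A) X = r * trace_inner A X"
  unfolding ti_sum by (simp add: sum_distrib_left mult.assoc)
lemma ti_neg[simp]: "trace_inner (- A) X = - trace_inner A X"
  unfolding ti_sum by (simp add: sum_negf)
lemma ti_diff[simp]: "trace_inner (A - B) X = trace_inner A X - trace_inner B X"
  unfolding ti_sum by (simp add: left_diff_distrib sum_subtractf)
lemma ti_add2[simp]: "trace_inner X (A + B) = trace_inner X A + trace_inner X B"
  unfolding ti_sum by (simp add: distrib_left sum.distrib)
lemma ti_scale2[simp]: "trace_inner X (r *\<^sub>R A) = r * trace_inner X A"
  unfolding ti_sum by (simp add: sum_distrib_left ac_simps)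
lemma ti_diff2[simp]: "trace_inner X (A - B) = trace_inner X A - trace_inner X B"
  unfolding ti_sum by (simp add: right_diff_distrib sum_subtractf)

lemma ti_zero[simp]: "trace_inner 0 X = 0"
  unfolding ti_sum by simp

lemma qf_add: "x \<bullet> (((A::real^'n::finite^'n) + B) *v x) = x \<bullet> (A *v x) + x \<bullet> (B *v x)"
  unfolding qf_sum by (simp add: distrib_left distrib_right sum.distrib)
lemma qf_scale: "x \<bullet> ((r *\<^sub>R (A::real^'n::finite^'n)) *v x) = r * (x \<bullet> (A *v x))"
  unfolding qf_sum by (simp add: sum_distrib_left ac_simps)
lemma qf_Eu: "x \<bullet> (Eu a b *v x) = x$a * x$b"
proof -
  have "x \<bullet> (Eu a b *v x) = (\<Sum>r\<in>UNIV. \<Sum>s\<in>UNIV. (if r = a \<and> s = b then x$r * x$s else 0))"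
    unfolding qf_sum by (intro sum.cong refl) auto
  then show ?thesis by (simp only: dsum_delta)
qed

lemma trace_add: "trace (A + B) = trace A + trace (B::real^'n^'n)"
  unfolding trace_def by (simp add: sum.distrib)
lemma trace_scale: "trace (r *\<^sub>R A) = r * trace (A::real^'n^'n)"
  unfolding trace_def by (simp add: sum_distrib_left)
lemma trace_Eu: "trace (Eu a b) = (if a = b then 1 else 0)"
  unfolding trace_def by (cases "a = b") (auto intro!: sum.neutral)

lemma sym_iff: "X \<in> sym_mats \<longleftrightarrow> (\<forall>a b. X$a$b = X$b$a)"
  by (auto simp: sym_mats_def transpose_def vec_eq_iff)

lemma psd_iff: "X \<in> psd_mats \<longleftrightarrow> X \<in> sym_mats \<and> (\<forall>x. 0 \<le> x \<bullet> (X *v x))"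
  by (simp add: psd_mats_def sym_mats_def)

lemma sum_one: "(\<And>s::'a::finite. s \<noteq> a \<Longrightarrow> f s = 0) \<Longrightarrow> (\<Sum>s\<in>UNIV. f s) = (f a::real)"
proof -
  assume h: "\<And>s. s \<noteq> a \<Longrightarrow> f s = 0"
  have "sum f UNIV = sum f {a}" by (rule sum.mono_neutral_right) (auto simp: h)
  then show ?thesis by simp
qed

lemma sum_two: "(a::'a::finite) \<noteq> b \<Longrightarrow> (\<And>s. s \<noteq> a \<Longrightarrow> s \<noteq> b \<Longrightarrow> f s = 0) \<Longrightarrow> (\<Sum>s\<in>UNIV. f s) = f a + (f b::real)"
proof -
  assume ab: "a \<noteq> b" and h: "\<And>s. s \<noteq> a \<Longrightarrow> s \<noteq> b \<Longrightarrow> f s = 0"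
  have "sum f UNIV = sum f {a,b}" by (rule sum.mono_neutral_right) (auto simp: h)
  then show ?thesis using ab by simp
qed

lemma psd_diag: assumes "X \<in> psd_mats" shows "0 \<le> X$a$a"
proof -
  define x :: "real^'a" where "x = (\<chi> r. if r = a then 1 else 0)"
  have "0 \<le> x \<bullet> (X *v x)" using assms by (simp add: psd_iff)
  also have "x \<bullet> (X *v x) = X$a$a"
    unfolding qf_sum
    apply (subst sum_one[of a]) apply (simp add: x_def)
    apply (subst sum_one[of a]) apply (simp add: x_def)
    by (simp add: x_def)
  finally show ?thesis .
qed

lemma psd_pair: assumes "X \<in> psd_mats" "a \<noteq> b"
  shows "0 \<le> p*p*X$a$a + 2*p*q*X$a$b + q*q*X$b$b"
proof -
  define x :: "real^'a" where "x = (\<chi> r. if r = a then p else if r = b then q else 0)"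
  have sym: "X$b$a = X$a$b" using assms(1) by (simp add: psd_iff sym_iff)
  have "0 \<le> x \<bullet> (X *v x)" using assms by (simp add: psd_iff)
  also have "x \<bullet> (X *v x) = x$a*X$a$a*x$a + x$a*X$a$b*x$b + (x$b*X$b$a*x$a + x$b*X$b$b*x$b)"
  proof -
    have inner: "\<And>r. (\<Sum>s\<in>UNIV. x$r*X$r$s*x$s) = x$r*X$r$a*x$a + x$r*X$r$b*x$b"
      by (rule sum_two[OF assms(2)]) (simp add: x_def)
    have outer: "(\<Sum>r\<in>UNIV. x$r*X$r$a*x$a + x$r*X$r$b*x$b) = (x$a*X$a$a*x$a + x$a*X$a$b*x$b) + (x$b*X$b$a*x$a + x$b*X$b$b*x$b)"
      by (rule sum_two[OF assms(2)]) (simp add: x_def)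
    show ?thesis unfolding qf_sum inner outer ..
  qed
  also have "\<dots> = p*p*X$a$a + 2*p*q*X$a$b + q*q*X$b$b"
    using assms(2) sym by (simp add: x_def algebra_simps)
  finally show ?thesis .
qed

lemma psd_zero_diag: assumes "X \<in> psd_mats" "X$a$a = 0" shows "X$a$b = 0"
proof (cases "a = b")
  case True then show ?thesis using assms by simp
next
  case False
  show ?thesis
  proof (rule ccontr)
    assume y: "X$a$b \<noteq> 0"
    define p where "p = - (X$b$b + 1) / (2 * X$a$b)"
    have "0 \<le> p*p*X$a$a + 2*p*1*X$a$b + 1*1*X$b$b" by (rule psd_pair[OF assms(1) False])
    moreover have "2*p*1*X$a$b = - (X$b$b + 1)" using y by (simp add: p_def field_simps)
    ultimately show False using assms(2) by simp
  qed
qed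

lemma diag_le_trace: assumes "X \<in> psd_mats" shows "X$a$a \<le> trace X"
  unfolding trace_def
  by (rule member_le_sum) (auto simp: psd_diag[OF assms])

lemma scalar_pos: assumes "0 < d" "0 < a" "\<And>t. 0 < t \<Longrightarrow> t < d \<Longrightarrow> t * a + t * t * b \<le> (0::real)"
  shows False
proof -
  define s where "s = min (d/2) (a / (2*(\<bar>b\<bar>+1)))"
  have s0: "0 < s" using assms by (simp add: s_def)
  have sd: "s < d" using assms by (simp add: s_def)
  have "s * (a + s * b) \<le> 0" using assms(3)[OF s0 sd] by (simp add: algebra_simps)
  then have h: "a + s * b \<le> 0" using s0 by (simp add: mult_le_0_iff)
  have "s \<le> a / (2*(\<bar>b\<bar>+1))" by (simp add: s_def)
  then have "s * (2*(\<bar>b\<bar>+1)) \<le> a" by (simp add: le_divide_eq)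
  then have "2 * (s * \<bar>b\<bar>) \<le> a" using s0 by (simp add: algebra_simps)
  moreover have "- (s * \<bar>b\<bar>) \<le> s * b" using s0
    by (metis abs_ge_minus_self abs_mult abs_of_pos minus_le_iff)
  ultimately show False using h assms(2) by linarith
qed

lemma scalar_zero: assumes "0 < d" "\<And>t. \<bar>t\<bar> < d \<Longrightarrow> t * a + t * t * b \<le> (0::real)"
  shows "a = 0"
proof (rule ccontr)
  assume "a \<noteq> 0"
  then consider "0 < a" | "0 < -a" by linarith
  then show False
  proof cases
    case 1
    show False by (rule scalar_pos[OF assms(1) 1, of b]) (use assms(2) in auto)
  next
    case 2
    show False
    proof (rule scalar_pos[OF assms(1) 2])
      fix t :: real assume "0 < t" "t < d"
      then have "(-t) * a + (-t) * (-t) * b \<le> 0" using assms(2)[of "-t"] by simp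
      then show "t * - a + t * t * b \<le> 0" by simp
    qed
  qed
qed

lemma subspace_sym: "subspace (sym_mats :: (real^'n::finite^'n) set)"
  unfolding subspace_def by (auto simp: sym_iff)

lemma orth:
  fixes N :: "(real^'n::finite^'n) set"
  assumes "sym_mats \<subseteq> span N" "W \<in> sym_mats" "\<forall>c\<in>N. trace_inner c W = 0"
  shows "W = 0"
proof -
  have sub: "subspace {x. trace_inner x W = 0}"
    unfolding subspace_def by auto
  have "span N \<subseteq> {x. trace_inner x W = 0}"
    by (rule span_minimal) (use assms(3) sub in auto)
  then have "trace_inner W W = 0" using assms(1,2) by auto
  then have e: "(\<Sum>a\<in>UNIV. \<Sum>b\<in>UNIV. W$a$b * W$a$b) = 0" by (simp add: ti_sum)
  have "\<forall>a\<in>UNIV. (\<Sum>b\<in>UNIV. W$a$b * W$a$b) = 0"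
    by (rule sum_nonneg_eq_0_iff[THEN iffD1, OF _ _ e]) (auto intro: sum_nonneg)
  then have "\<forall>a b. W$a$b * W$a$b = 0"
  proof (intro allI)
    fix a b
    assume h: "\<forall>a\<in>UNIV. (\<Sum>b\<in>UNIV. W$a$b * W$a$b) = 0"
    have "\<forall>b\<in>UNIV. W$a$b * W$a$b = 0"
      by (rule sum_nonneg_eq_0_iff[THEN iffD1]) (use h in auto)
    then show "W$a$b * W$a$b = 0" by simp
  qed
  then show ?thesis by (simp add: vec_eq_iff)
qed


lemma dsum_delta2: "(\<Sum>a\<in>(UNIV::'a::finite set). \<Sum>b\<in>(UNIV::'b::finite set). (if r = a \<and> s = b then (f a b::real) else 0)) = f r s"
proof -
  have "\<And>a. (\<Sum>b\<in>(UNIV::'b set). (if r = a \<and> s = b then (f a b::real) else 0)) = (if r = a then f r s else 0)"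
    by (case_tac "r = a") (simp_all add: sum.delta')
  then show ?thesis by (simp add: sum.delta')
qed

lemma dsum_delta3: "(\<Sum>a\<in>(UNIV::'a::finite set). \<Sum>b\<in>(UNIV::'a set). (if r = b \<and> s = a then (f a b::real) else 0)) = f s r"
proof -
  have "\<And>a. (\<Sum>b\<in>(UNIV::'a set). (if r = b \<and> s = a then (f a b::real) else 0)) = (if s = a then f s r else 0)"
    by (case_tac "s = a") (simp_all add: sum.delta')
  then show ?thesis by (simp add: sum.delta')
qed

lemma specC_iff: "X \<in> specC Ep Em \<longleftrightarrow> X \<in> psd_mats \<and> trace X = 1
      \<and> (\<forall>i j. {i,j} \<in> Ep \<longrightarrow> X$i$j \<ge> 0) \<and> (\<forall>i j. {i,j} \<in> Em \<longrightarrow> X$i$j \<le> 0)"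
  by (simp add: specC_def)

lemma edge_ne: assumes "\<forall>e\<in>E. card e = 2" "{i,j} \<in> E" shows "i \<noteq> j"
proof
  assume "i = j"
  then have "card {i,j} = 1" by simp
  then show False using assms by auto
qed

lemma ekek_Eu: "ekek k = Eu k k"
  by (simp add: ekek_def vec_eq_iff axis_def)

lemma deg_full:
  fixes E :: "'n::finite set set"
  assumes "\<forall>e\<in>E. card e = 2"
  shows "graph_deg E k = CARD('n) - 1 \<longleftrightarrow> (\<forall>j. j \<noteq> k \<longrightarrow> {k,j} \<in> E)"
proof -
  have sub: "{j. {k,j} \<in> E} \<subseteq> UNIV - {k}" using edge_ne[OF assms] by blast
  have c: "card (UNIV - {k}) = CARD('n) - 1" by (simp add: card_Diff_singleton)
  show ?thesis
  proof
    assume "graph_deg E k = CARD('n) - 1"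
    then have "card {j. {k,j} \<in> E} = card (UNIV - {k})" using c by (simp add: graph_deg_def)
    then have "{j. {k,j} \<in> E} = UNIV - {k}" by (intro card_subset_eq sub) auto
    then show "\<forall>j. j \<noteq> k \<longrightarrow> {k,j} \<in> E" by blast
  next
    assume "\<forall>j. j \<noteq> k \<longrightarrow> {k,j} \<in> E"
    then have "{j. {k,j} \<in> E} = UNIV - {k}" using sub by blast
    then show "graph_deg E k = CARD('n) - 1" using c by (simp add: graph_deg_def)
  qed
qed

lemma vertex_span:
  fixes C :: "(real^'n::finite^'n) set"
  assumes "xb \<in> vertices C" shows "sym_mats \<subseteq> span (normal_cone C xb)"
proof -
  have sub: "normal_cone C xb \<subseteq> sym_mats" by (auto simp: normal_cone_def)
  have "dim (normal_cone C xb) = dim (sym_mats :: (real^'n^'n) set)" using assms by (simp add: vertices_def)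
  then have "span (normal_cone C xb) = span sym_mats" by (intro dim_eq_span sub) simp
  moreover have "span sym_mats = (sym_mats :: (real^'n^'n) set)" using subspace_sym by (simp add: span_eq_iff)
  ultimately show ?thesis by simp
qed

lemma span_vertex:
  fixes C :: "(real^'n::finite^'n) set"
  assumes "xb \<in> C" "sym_mats \<subseteq> span (normal_cone C xb)" shows "xb \<in> vertices C"
proof -
  have sub: "normal_cone C xb \<subseteq> sym_mats" by (auto simp: normal_cone_def)
  have "span (normal_cone C xb) \<subseteq> sym_mats" by (rule span_minimal[OF sub subspace_sym])
  then have eq: "span (normal_cone C xb) = sym_mats" using assms(2) by auto
  have "dim (normal_cone C xb) = dim (span (normal_cone C xb))" by (simp add: dim_span)
  also have "\<dots> = dim (sym_mats :: (real^'n^'n) set)" using eq by simp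
  finally show ?thesis using assms(1) by (simp add: vertices_def)
qed

lemma caseB:
  fixes X :: "real^'n::finite^'n"
  assumes X: "X \<in> specC Ep Em" and sp: "sym_mats \<subseteq> span (normal_cone (specC Ep Em) X)"
    and i0: "0 < X$i$i" and i1: "X$i$i \<noteq> 1"
  shows False
proof -
  have Xpsd: "X \<in> psd_mats" and trX: "trace X = 1"
    and Ep: "\<And>a b. {a,b}\<in>Ep \<Longrightarrow> X$a$b \<ge> 0" and Em: "\<And>a b. {a,b}\<in>Em \<Longrightarrow> X$a$b \<le> 0"
    using X by (auto simp: specC_iff)
  have sym: "\<And>a b. X$a$b = X$b$a" using Xpsd by (simp add: psd_iff sym_iff)
  have ile: "X$i$i \<le> 1" using diag_le_trace[OF Xpsd] trX by simp
  define x0 where "x0 = X$i$i"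
  define D where "D = (\<chi> a b. X$a$b * ((if a = i then 1 else 0) + (if b = i then 1 else 0)))"
  define Q where "Q = (\<chi> a b. X$a$b * (if a = i \<and> b = i then 1 else 0))"
  define W where "W = D - (2 * x0) *\<^sub>R X"
  have Wsym: "W \<in> sym_mats" unfolding sym_iff W_def D_def using sym by (auto simp: add.commute)
  have "W$i$i = 2 * x0 * (1 - x0)" by (simp add: W_def D_def x0_def algebra_simps)
  then have Wii: "W$i$i \<noteq> 0" using i0 i1 by (simp add: x0_def)
  have "\<forall>c\<in>normal_cone (specC Ep Em) X. trace_inner c W = 0"
  proof
    fix c assume c: "c \<in> normal_cone (specC Ep Em) X"
    have cle: "\<And>Z. Z \<in> specC Ep Em \<Longrightarrow> trace_inner c Z \<le> trace_inner c X"
      using c by (auto simp: normal_cone_def)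
    have key: "t * trace_inner c W + t * t * (trace_inner c Q - x0 * trace_inner c X) \<le> 0"
      if t: "\<bar>t\<bar> < 1" for t
    proof -
      define m where "m = (\<lambda>a. if a = i then 1 + t else (1::real))"
      have mpos: "\<And>a. 0 < m a" using t by (auto simp: m_def)
      define Y where "Y = (\<chi> a b. m a * X$a$b * m b)"
      have Yeq: "Y = X + t *\<^sub>R D + (t*t) *\<^sub>R Q"
        by (auto simp: vec_eq_iff Y_def m_def D_def Q_def algebra_simps)
      define tau where "tau = 1 + (2*t + t*t) * x0"
      have trD: "trace D = 2 * x0"
        unfolding trace_def D_def x0_def by (simp add: distrib_left sum.distrib ifm2 sum.delta flip: sum_distrib_left)
      have trQ: "trace Q = x0"
        unfolding trace_def Q_def x0_def by (simp add: ifm2 sum.delta)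
      have trY: "trace Y = tau"
        by (simp add: Yeq trace_add trace_scale trX trD trQ tau_def algebra_simps)
      have "tau = (1+t)*(1+t)*x0 + (1 - x0)" by (simp add: tau_def algebra_simps)
      moreover have "0 < (1+t)*(1+t)*x0" using t i0 by (simp add: x0_def)
      moreover have "0 \<le> 1 - x0" using ile by (simp add: x0_def)
      ultimately have taupos: "0 < tau" by linarith
      have Ysym: "Y \<in> sym_mats" by (auto simp: sym_iff Y_def sym ac_simps)
      have Yqf: "0 \<le> x \<bullet> (Y *v x)" for x
      proof -
        define y where "y = (\<chi> a. m a * x$a)"
        have eq: "x \<bullet> (Y *v x) = y \<bullet> (X *v y)" unfolding qf_sum Y_def y_def by (simp add: ac_simps)
        have "0 \<le> y \<bullet> (X *v y)" using Xpsd by (simp add: psd_iff)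
        then show ?thesis using eq by simp
      qed
      define Z where "Z = (1/tau) *\<^sub>R Y"
      have Zent: "Z$a$b = (1/tau) * (m a * m b) * X$a$b" for a b by (simp add: Z_def Y_def ac_simps)
      have mm: "0 < (1/tau) * (m a * m b)" for a b using taupos mpos by simp
      have "Z \<in> specC Ep Em"
        unfolding specC_iff
      proof (intro conjI allI impI)
        show "Z \<in> psd_mats" unfolding psd_iff
        proof
          show "Z \<in> sym_mats" using Ysym by (simp add: Z_def sym_iff)
          show "\<forall>x. 0 \<le> x \<bullet> (Z *v x)" using Yqf taupos by (simp add: Z_def qf_scale)
        qed
        show "trace Z = 1" using taupos by (simp add: Z_def trace_scale trY)
        fix a b
        show "{a,b} \<in> Ep \<Longrightarrow> 0 \<le> Z$a$b"
        proof -
          assume "{a,b} \<in> Ep"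
          then have "0 \<le> X$a$b" by (rule Ep)
          then show ?thesis unfolding Zent by (rule mult_nonneg_nonneg[OF less_imp_le[OF mm[of a b]]])
        qed
        show "{a,b} \<in> Em \<Longrightarrow> Z$a$b \<le> 0"
        proof -
          assume "{a,b} \<in> Em"
          then have "X$a$b \<le> 0" by (rule Em)
          then show ?thesis unfolding Zent by (rule mult_nonneg_nonpos[OF less_imp_le[OF mm[of a b]]])
        qed
      qed
      then have "trace_inner c Z \<le> trace_inner c X" by (rule cle)
      then have "(1/tau) * trace_inner c Y \<le> trace_inner c X" by (simp add: Z_def)
      then have h1: "trace_inner c Y \<le> tau * trace_inner c X" using taupos by (simp add: field_simps)
      have h2: "trace_inner c Y = trace_inner c X + t * trace_inner c D + (t*t) * trace_inner c Q"
        by (simp add: Yeq)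
      have h3: "trace_inner c W = trace_inner c D - 2*x0*trace_inner c X" by (simp add: W_def)
      have "t * trace_inner c W + t * t * (trace_inner c Q - x0 * trace_inner c X)
            = trace_inner c Y - tau * trace_inner c X"
        by (simp add: h2 h3 tau_def algebra_simps)
      then show ?thesis using h1 by linarith
    qed
    show "trace_inner c W = 0"
      by (rule scalar_zero[of 1 _ "trace_inner c Q - x0 * trace_inner c X"]) (use key in auto)
  qed
  then have "W = 0" by (rule orth[OF sp Wsym])
  with Wii show False by simp
qed


lemma Eu_off: "\<not>(r = a \<and> s = b) \<Longrightarrow> Eu a b $ r $ s = 0"
  unfolding Eu_entry by (rule if_not_P)

lemma Eu_tr: "Eu a b $ r $ s = Eu b a $ s $ r"
  by (simp add: conj_commute)

lemma Eu_pair_sym: "Eu a b + Eu b a \<in> sym_mats"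
  unfolding sym_iff
proof (intro allI)
  fix r s
  have "Eu a b $ r $ s = Eu b a $ s $ r" "Eu b a $ r $ s = Eu a b $ s $ r" by (rule Eu_tr)+
  then show "(Eu a b + Eu b a) $ r $ s = (Eu a b + Eu b a) $ s $ r" by simp
qed

lemma Eu_diag_sym: "Eu a a \<in> sym_mats"
  unfolding sym_iff by (metis Eu_tr)

lemma sym_add: "A \<in> sym_mats \<Longrightarrow> B \<in> sym_mats \<Longrightarrow> A + B \<in> sym_mats"
  by (simp add: sym_iff)
lemma sym_scale: "A \<in> sym_mats \<Longrightarrow> (r::real) *\<^sub>R A \<in> sym_mats"
  by (simp add: sym_iff)
lemma sym_neg: "A \<in> sym_mats \<Longrightarrow> - A \<in> sym_mats"
  by (simp add: sym_iff)
lemma sym_diff: "A \<in> sym_mats \<Longrightarrow> B \<in> sym_mats \<Longrightarrow> A - B \<in> sym_mats"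
  by (simp add: sym_iff)

lemma tt_bound: assumes "\<bar>t\<bar> < 1/2" shows "t * t \<le> (1/4::real)"
proof -
  have "\<bar>t\<bar> * \<bar>t\<bar> \<le> (1/2) * (1/2)" using assms by (intro mult_mono) auto
  then show ?thesis by (simp add: abs_mult_self_eq)
qed

lemma caseA:
  fixes Ep Em :: "'n::finite set set"
  assumes cEp: "\<forall>e\<in>Ep. card e = 2" and cEm: "\<forall>e\<in>Em. card e = 2"
    and sp: "sym_mats \<subseteq> span (normal_cone (specC Ep Em) (Eu k k))"
    and jk: "j \<noteq> k" and nEp: "{k,j} \<notin> Ep" and nEm: "{k,j} \<notin> Em"
  shows False
proof -
  define W where "W = Eu k j + Eu j k"
  have Wsym: "W \<in> sym_mats" unfolding W_def by (rule Eu_pair_sym)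
  have Wkj: "W$k$j \<noteq> 0" using jk by (simp add: W_def)
  have "\<forall>c\<in>normal_cone (specC Ep Em) (Eu k k). trace_inner c W = 0"
  proof
    fix c assume c: "c \<in> normal_cone (specC Ep Em) (Eu k k)"
    have cle: "\<And>Z. Z \<in> specC Ep Em \<Longrightarrow> trace_inner c Z \<le> trace_inner c (Eu k k)"
      using c by (auto simp: normal_cone_def)
    have key: "t * trace_inner c W + t * t * (2 * c$j$j - 2 * c$k$k) \<le> 0"
      if t: "\<bar>t\<bar> < 1/2" for t
    proof -
      define Y where "Y = (1 - 2*t*t) *\<^sub>R Eu k k + t *\<^sub>R W + (2*t*t) *\<^sub>R Eu j j"
      have Ysym: "Y \<in> sym_mats" unfolding Y_def
        by (intro sym_add sym_scale Eu_diag_sym Wsym)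
      have qf: "0 \<le> x \<bullet> (Y *v x)" for x
      proof -
        have "x \<bullet> (Y *v x) = (1 - 2*t*t) * (x$k*x$k) + t * (x$k*x$j + x$j*x$k) + 2*t*t*(x$j*x$j)"
          by (simp add: Y_def W_def qf_add qf_scale qf_Eu)
        also have "\<dots> = 2*(t*x$j + x$k/2)^2 + (1/2 - 2*t*t)*(x$k)^2"
          by (simp add: algebra_simps power2_eq_square)
        also have "0 \<le> \<dots>" using tt_bound[OF t] by (intro add_nonneg_nonneg mult_nonneg_nonneg) auto
        finally show ?thesis by simp
      qed
      have tr: "trace Y = 1" using jk by (simp add: Y_def W_def trace_add trace_scale trace_Eu)
      have ent: "Y$a$b = 0" if "a \<noteq> b" "\<not>(a = k \<and> b = j)" "\<not>(a = j \<and> b = k)" for a b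
      proof -
        have n1: "\<not>(a = k \<and> b = k)" and n4: "\<not>(a = j \<and> b = j)" using that(1) by auto
        have e1: "Eu k k $ a $ b = 0" unfolding Eu_entry using n1 by (rule if_not_P)
        have e2: "Eu k j $ a $ b = 0" unfolding Eu_entry using that(2) by (rule if_not_P)
        have e3: "Eu j k $ a $ b = 0" unfolding Eu_entry using that(3) by (rule if_not_P)
        have e4: "Eu j j $ a $ b = 0" unfolding Eu_entry using n4 by (rule if_not_P)
        show ?thesis
          by (simp only: Y_def W_def vector_add_component vector_scaleR_component e1 e2 e3 e4) simp
      qed
      have "Y \<in> specC Ep Em"
        unfolding specC_iff
      proof (intro conjI allI impI)
        show "Y \<in> psd_mats" unfolding psd_iff using Ysym qf by blast
        show "trace Y = 1" by (rule tr)
        fix a b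
        show "{a,b} \<in> Ep \<Longrightarrow> 0 \<le> Y$a$b"
        proof -
          assume e: "{a,b} \<in> Ep"
          have "a \<noteq> b" by (rule edge_ne[OF cEp e])
          moreover have "\<not>(a = k \<and> b = j)" using e nEp by auto
          moreover have "\<not>(a = j \<and> b = k)" using e nEp by (auto simp: insert_commute)
          ultimately show ?thesis using ent by simp
        qed
        show "{a,b} \<in> Em \<Longrightarrow> Y$a$b \<le> 0"
        proof -
          assume e: "{a,b} \<in> Em"
          have "a \<noteq> b" by (rule edge_ne[OF cEm e])
          moreover have "\<not>(a = k \<and> b = j)" using e nEm by auto
          moreover have "\<not>(a = j \<and> b = k)" using e nEm by (auto simp: insert_commute)
          ultimately show ?thesis using ent by simp
        qed
      qed
      then have "trace_inner c Y \<le> trace_inner c (Eu k k)" by (rule cle)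
      then have h1: "trace_inner c Y \<le> c$k$k" by simp
      have h2: "trace_inner c Y = (1 - 2*t*t) * c$k$k + t * trace_inner c W + (2*t*t) * c$j$j"
        by (simp add: Y_def)
      have "t * trace_inner c W + t * t * (2 * c$j$j - 2 * c$k$k) = trace_inner c Y - c$k$k"
        by (simp add: h2 algebra_simps)
      then show ?thesis using h1 by linarith
    qed
    show "trace_inner c W = 0"
      by (rule scalar_zero[of "1/2" _ "2 * c$j$j - 2 * c$k$k"]) (use key in auto)
  qed
  then have "W = 0" by (rule orth[OF sp Wsym])
  with Wkj show False by simp
qed


lemma full_vertex:
  fixes Ep Em :: "'n::finite set set"
  assumes cEp: "\<forall>e\<in>Ep. card e = 2" and cEm: "\<forall>e\<in>Em. card e = 2"
    and full: "\<forall>j. j \<noteq> k \<longrightarrow> {k,j} \<in> Ep \<union> Em"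
  shows "Eu k k \<in> vertices (specC Ep Em)"
proof -
  let ?C = "specC Ep Em"
  let ?N = "normal_cone ?C (Eu k k)"
  have ent0: "Eu k k $ a $ b = 0" if "a \<noteq> b" for a b
  proof -
    have "\<not>(a = k \<and> b = k)" using that by auto
    then show ?thesis unfolding Eu_entry by (rule if_not_P)
  qed
  have inC: "Eu k k \<in> ?C"
    unfolding specC_iff
  proof (intro conjI allI impI)
    show "Eu k k \<in> psd_mats" unfolding psd_iff using Eu_diag_sym by (simp add: qf_Eu)
    show "trace (Eu k k) = 1" by (simp add: trace_Eu)
    fix a b
    show "{a,b} \<in> Ep \<Longrightarrow> 0 \<le> Eu k k $ a $ b" by simp
    show "{a,b} \<in> Em \<Longrightarrow> Eu k k $ a $ b \<le> 0"
    proof -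
      assume e: "{a,b} \<in> Em"
      have "a \<noteq> b" by (rule edge_ne[OF cEm e])
      then show ?thesis using ent0 by simp
    qed
  qed
  have memN: "c \<in> ?N" if "c \<in> sym_mats" "\<And>X. X \<in> ?C \<Longrightarrow> trace_inner c X \<le> c$k$k" for c
    using that by (simp add: normal_cone_def)
  define S :: "'n \<Rightarrow> 'n \<Rightarrow> real^'n^'n" where "S = (\<lambda>a b. Eu a b + Eu b a)"
  have Ssym_mat: "S a b \<in> sym_mats" for a b by (simp add: S_def Eu_pair_sym)
  have Scomm: "S a b = S b a" for a b by (simp add: S_def add.commute)
  have Ekk_N: "Eu k k \<in> ?N"
  proof (rule memN[OF Eu_diag_sym])
    fix X assume "X \<in> ?C"
    then have "X \<in> psd_mats" "trace X = 1" by (simp_all add: specC_iff)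
    then show "trace_inner (Eu k k) X \<le> Eu k k $ k $ k" using diag_le_trace[of X k] by simp
  qed
  have negE_N: "- Eu a a \<in> ?N" if "a \<noteq> k" for a
  proof (rule memN[OF sym_neg[OF Eu_diag_sym]])
    fix X assume "X \<in> ?C"
    then have "X \<in> psd_mats" by (simp add: specC_iff)
    then have "0 \<le> X$a$a" by (rule psd_diag)
    moreover have "(- Eu a a) $ k $ k = 0" using that by simp
    ultimately show "trace_inner (- Eu a a) X \<le> (- Eu a a) $ k $ k" by simp
  qed
  have Sk: "S k b \<in> span ?N" for b
  proof (cases "b = k")
    case True
    have "S k b = 2 *\<^sub>R Eu k k" using True by (simp add: S_def scaleR_2)
    then show ?thesis using span_scale[OF span_base[OF Ekk_N]] by simp
  next
    case False
    have e0: "S k b $ k $ k = 0" using False by (simp add: S_def)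
    have tiS: "trace_inner (S k b) X = X$k$b + X$b$k" for X by (simp add: S_def)
    from full False have "{k,b} \<in> Ep \<or> {k,b} \<in> Em" by auto
    then show ?thesis
    proof
      assume e: "{k,b} \<in> Ep"
      have e': "{b,k} \<in> Ep" using e by (simp add: insert_commute)
      have "- S k b \<in> ?N"
      proof (rule memN)
        show "- S k b \<in> sym_mats" by (rule sym_neg[OF Ssym_mat])
        fix X assume X: "X \<in> ?C"
        have "0 \<le> X$k$b" "0 \<le> X$b$k" using X e e' by (auto simp: specC_iff)
        then show "trace_inner (- S k b) X \<le> (- S k b)$k$k" using e0 tiS[of X] by simp
      qed
      then have "- (- S k b) \<in> span ?N" by (intro span_neg span_base)
      then show ?thesis by simp
    next
      assume e: "{k,b} \<in> Em"
      have e': "{b,k} \<in> Em" using e by (simp add: insert_commute)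
      have "S k b \<in> ?N"
      proof (rule memN)
        show "S k b \<in> sym_mats" by (rule Ssym_mat)
        fix X assume X: "X \<in> ?C"
        have "X$k$b \<le> 0" "X$b$k \<le> 0" using X e e' by (auto simp: specC_iff)
        then show "trace_inner (S k b) X \<le> (S k b)$k$k" using e0 tiS[of X] by simp
      qed
      then show ?thesis by (rule span_base)
    qed
  qed
  have Sall: "S a b \<in> span ?N" for a b
  proof -
    consider "a = k" | "b = k" | "a \<noteq> k" "b \<noteq> k" "a = b" | "a \<noteq> k" "b \<noteq> k" "a \<noteq> b" by blast
    then show ?thesis
    proof cases
      case 1 then show ?thesis using Sk by simp
    next
      case 2 then show ?thesis using Sk[of a] Scomm[of a b] by simp
    next
      case 3
      have "S a b = - ((2::real) *\<^sub>R (- Eu a a))" unfolding S_def 3(3) by (simp only: scaleR_2 minus_add_distrib minus_minus)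
      moreover have "- ((2::real) *\<^sub>R (- Eu a a)) \<in> span ?N"
        by (intro span_neg span_scale span_base negE_N 3)
      ultimately show ?thesis by simp
    next
      case 4
      define cp where "cp = S a b - (Eu a a + Eu b b)"
      define cm where "cm = - S a b - (Eu a a + Eu b b)"
      have dsym: "Eu a a + Eu b b \<in> sym_mats" by (intro sym_add Eu_diag_sym)
      have z: "cp $ k $ k = 0" "cm $ k $ k = 0" proof -
        have "Eu a b $ k $ k = 0" by (rule Eu_off) (use 4 in blast)
        moreover have "Eu b a $ k $ k = 0" by (rule Eu_off) (use 4 in blast)
        moreover have "Eu a a $ k $ k = 0" by (rule Eu_off) (use 4 in blast)
        moreover have "Eu b b $ k $ k = 0" by (rule Eu_off) (use 4 in blast)
        ultimately show "cp $ k $ k = 0" "cm $ k $ k = 0"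
          by (simp_all only: cp_def cm_def S_def vector_add_component vector_minus_component vector_uminus_component)
      qed
      have tiS: "trace_inner (S a b) X = X$a$b + X$b$a" for X by (simp add: S_def)
      have cpN: "cp \<in> ?N"
      proof (rule memN)
        show "cp \<in> sym_mats" unfolding cp_def by (intro sym_diff Ssym_mat dsym)
        fix X assume X: "X \<in> ?C"
        then have P: "X \<in> psd_mats" by (simp add: specC_iff)
        have sy: "X$b$a = X$a$b" using P by (simp add: psd_iff sym_iff)
        have "0 \<le> 1*1*X$a$a + 2*1*(-1)*X$a$b + (-1)*(-1)*X$b$b" by (rule psd_pair[OF P 4(3)])
        then show "trace_inner cp X \<le> cp$k$k" using z tiS[of X] sy by (simp add: cp_def)
      qed
      have cmN: "cm \<in> ?N"
      proof (rule memN)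
        show "cm \<in> sym_mats" unfolding cm_def by (intro sym_diff sym_neg Ssym_mat dsym)
        fix X assume X: "X \<in> ?C"
        then have P: "X \<in> psd_mats" by (simp add: specC_iff)
        have sy: "X$b$a = X$a$b" using P by (simp add: psd_iff sym_iff)
        have "0 \<le> 1*1*X$a$a + 2*1*1*X$a$b + 1*1*X$b$b" by (rule psd_pair[OF P 4(3)])
        then show "trace_inner cm X \<le> cm$k$k" using z tiS[of X] sy by (simp add: cm_def)
      qed
      have "cp - cm = 2 *\<^sub>R S a b" unfolding cp_def cm_def scaleR_2 by (simp add: algebra_simps)
      then have eq: "S a b = (1/2) *\<^sub>R (cp - cm)" by simp
      have "cp - cm \<in> span ?N" by (intro span_diff span_base cpN cmN)
      then show ?thesis unfolding eq by (rule span_scale)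
    qed
  qed
  have "sym_mats \<subseteq> span ?N"
  proof
    fix X :: "real^'n^'n" assume "X \<in> sym_mats"
    then have sy: "\<And>a b. X$a$b = X$b$a" by (simp add: sym_iff)
    have "X = (\<Sum>a\<in>(UNIV::'n set). \<Sum>b\<in>(UNIV::'n set). (X$a$b / 2) *\<^sub>R S a b)"
    proof -
      have "(\<Sum>a\<in>(UNIV::'n set). \<Sum>b\<in>(UNIV::'n set). (X$a$b / 2) *\<^sub>R S a b) $ r $ s = X$r$s" for r s
      proof -
        have "(\<Sum>a\<in>(UNIV::'n set). \<Sum>b\<in>(UNIV::'n set). (X$a$b / 2) *\<^sub>R S a b) $ r $ s
            = (\<Sum>a\<in>(UNIV::'n set). \<Sum>b\<in>(UNIV::'n set). (if r = a \<and> s = b then X$a$b/2 else 0) + (if r = b \<and> s = a then X$a$b/2 else 0))"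
          unfolding sum_component
          by (intro sum.cong refl) (simp only: S_def vector_scaleR_component vector_add_component Eu_entry real_scaleR_def distrib_left ifm2)
        also have "\<dots> = X$r$s/2 + X$s$r/2"
          by (simp only: sum.distrib dsum_delta2 dsum_delta3)
        also have "\<dots> = X$r$s" using sy[of s r] by simp
        finally show ?thesis .
      qed
      then show ?thesis by (simp add: vec_eq_iff)
    qed
    also have "\<dots> \<in> span ?N" by (intro span_sum span_scale Sall)
    finally show "X \<in> span ?N" .
  qed
  then show ?thesis by (rule span_vertex[OF inC])
qed

theorem theorem3p6:
  fixes Ep Em :: "'n::finite set set"
  assumes "\<forall>e\<in>Ep. card e = 2" and "\<forall>e\<in>Em. card e = 2"
  shows "vertices (specC Ep Em) =
           {ekek k | k. graph_deg (Ep \<union> Em) k = CARD('n) - 1}"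
proof (rule equalityI)
  let ?C = "specC Ep Em"
  have cE: "\<forall>e\<in>Ep \<union> Em. card e = 2" using assms by blast
  show "vertices ?C \<subseteq> {ekek k | k. graph_deg (Ep \<union> Em) k = CARD('n) - 1}"
  proof
    fix xb assume v: "xb \<in> vertices ?C"
    have inC: "xb \<in> ?C" using v by (simp add: vertices_def)
    have sp: "sym_mats \<subseteq> span (normal_cone ?C xb)" by (rule vertex_span[OF v])
    have P: "xb \<in> psd_mats" and tr: "trace xb = 1" using inC by (simp_all add: specC_iff)
    have d01: "xb$i$i = 0 \<or> xb$i$i = 1" for i
    proof (rule ccontr)
      assume "\<not> (xb$i$i = 0 \<or> xb$i$i = 1)"
      then have "0 < xb$i$i" "xb$i$i \<noteq> 1" using psd_diag[OF P, of i] by auto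
      then show False using caseB[OF inC sp] by blast
    qed
    have "\<exists>k. xb$k$k \<noteq> 0"
    proof (rule ccontr)
      assume "\<not> (\<exists>k. xb$k$k \<noteq> 0)"
      then have "trace xb = 0" by (simp add: trace_def)
      with tr show False by simp
    qed
    then obtain k where k: "xb$k$k \<noteq> 0" by blast
    then have k1: "xb$k$k = 1" using d01 by blast
    have others: "xb$i$i = 0" if "i \<noteq> k" for i
    proof (rule ccontr)
      assume "xb$i$i \<noteq> 0"
      then have i1: "xb$i$i = 1" using d01 by blast
      have "sum (\<lambda>a. xb$a$a) {k,i} \<le> sum (\<lambda>a. xb$a$a) UNIV"
        by (rule sum_mono2) (auto simp: psd_diag[OF P])
      then have "2 \<le> trace xb" using that k1 i1 by (simp add: trace_def)
      with tr show False by simp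
    qed
    have xbE: "xb = Eu k k"
    proof -
      have "xb$a$b = Eu k k $a$b" for a b
      proof (cases "a = k \<and> b = k")
        case True then show ?thesis using k1 by simp
      next
        case False
        then have "a \<noteq> k \<or> b \<noteq> k" by simp
        then have "xb$a$b = 0"
        proof
          assume "a \<noteq> k" then show ?thesis by (rule psd_zero_diag[OF P others])
        next
          assume "b \<noteq> k" then have "xb$b$a = 0" by (rule psd_zero_diag[OF P others])
          moreover have "xb$a$b = xb$b$a" using P by (simp add: psd_iff sym_iff)
          ultimately show ?thesis by simp
        qed
        then show ?thesis using False by simp
      qed
      then show ?thesis by (simp add: vec_eq_iff)
    qed
    have deg: "graph_deg (Ep \<union> Em) k = CARD('n) - 1"
    proof (rule ccontr)
      assume "\<not> ?thesis"
      then obtain j where "j \<noteq> k" "{k,j} \<notin> Ep \<union> Em" using deg_full[OF cE, of k] by blast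
      then show False using caseA[OF assms(1,2) sp[unfolded xbE]] by blast
    qed
    show "xb \<in> {ekek k | k. graph_deg (Ep \<union> Em) k = CARD('n) - 1}"
      using xbE deg by (auto simp: ekek_Eu)
  qed
  show "{ekek k | k. graph_deg (Ep \<union> Em) k = CARD('n) - 1} \<subseteq> vertices ?C"
  proof
    fix xb assume "xb \<in> {ekek k | k. graph_deg (Ep \<union> Em) k = CARD('n) - 1}"
    then obtain k where xb: "xb = Eu k k" and deg: "graph_deg (Ep \<union> Em) k = CARD('n) - 1"
      by (auto simp: ekek_Eu)
    have "\<forall>j. j \<noteq> k \<longrightarrow> {k,j} \<in> Ep \<union> Em" using deg deg_full[OF cE] by blast
    then show "xb \<in> vertices ?C" using full_vertex[OF assms] xb by simp
  qed
qed

end
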